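(* Let $k\ge3$ and let $G,H$ be $2$-connected graphs. Let $u,v\in V(G)$ and $u',v'\in V(H)$ be such that $G-\{u,v\}$ is disconnected and $H-\{u',v'\}$ is connected. Then $\chi^k_G(u,v)\ne\chi^k_H(u',v')$.
   Context: Graphs are finite, simple, undirected (possibly colored). A graph is $2$-connected if it has more than $2$ vertices and removing any one vertex leaves it connected. For $k\ge2$, the $k$-dimensional Weisfeiler–Leman algorithm computes a coloring of $V(G)^k$: the initial color of a tuple consists of its input color and the isomorphism type of the ordered induced subgraph on its entries; in each round the new color of $\bar v$ is the pair of its old color and the multiset, over $w\in V(G)$, of the $k$-tuples whose $i$-th component is the old color of $\bar v$ with its $i$-th entry replaced by $w$; the stable coloring is $\chi^k_G$, with canonical colors comparable across graphs. For $\ell<k$, $\chi^k_G(u_1,\dots,u_\ell):=\chi^k_G(u_1,\dots,u_\ell,u_\ell,\dots,u_\ell)$. *)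

theory Defs
  imports Main "HOL-Library.Multiset"
begin

definition graph :: "'a set \<Rightarrow> ('a \<Rightarrow> 'a \<Rightarrow> bool) \<Rightarrow> bool" where
  "graph V E \<longleftrightarrow> finite V \<and> (\<forall>x y. E x y \<longrightarrow> x \<in> V \<and> y \<in> V \<and> x \<noteq> y \<and> E y x)"

definition connected_on :: "'a set \<Rightarrow> ('a \<Rightarrow> 'a \<Rightarrow> bool) \<Rightarrow> bool" where
  "connected_on S E \<longleftrightarrow>
     (\<forall>x\<in>S. \<forall>y\<in>S. (x, y) \<in> {(a, b). a \<in> S \<and> b \<in> S \<and> E a b}\<^sup>*)"

definition two_connected :: "'a set \<Rightarrow> ('a \<Rightarrow> 'a \<Rightarrow> bool) \<Rightarrow> bool" where
  "two_connected V E \<longleftrightarrow> card V > 2 \<and> (\<forall>x\<in>V. connected_on (V - {x}) E)"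

text \<open>Canonical WL colours (comparable across graphs): the initial colour of a tuple
is the list of input colours together with its atomic type (equality and adjacency
pattern of its entries); a refined colour is the pair of the old colour and the
multiset over w of the tuples of old colours of the tuples with the i-th entry
replaced by w.\<close>

datatype 'c wlcol =
    Init "'c list" "(bool \<times> bool) list list"
  | Refine "'c wlcol" "'c wlcol list multiset"

definition atp :: "('a \<Rightarrow> 'a \<Rightarrow> bool) \<Rightarrow> 'a list \<Rightarrow> (bool \<times> bool) list list" where
  "atp E vs = map (\<lambda>i. map (\<lambda>j. (vs ! i = vs ! j, E (vs ! i) (vs ! j))) [0..<length vs]) [0..<length vs]"

fun wl_round :: "'a set \<Rightarrow> ('a \<Rightarrow> 'a \<Rightarrow> bool) \<Rightarrow> ('a \<Rightarrow> 'c) \<Rightarrow> nat \<Rightarrow> 'a list \<Rightarrow> 'c wlcol" where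
  "wl_round V E col 0 vs = Init (map col vs) (atp E vs)"
| "wl_round V E col (Suc n) vs =
     Refine (wl_round V E col n vs)
       (image_mset (\<lambda>w. map (\<lambda>i. wl_round V E col n (vs[i := w])) [0..<length vs]) (mset_set V))"

text \<open>Stable colour: two tuples (possibly in different graphs) get the same stable
colour iff they get the same colour in every round. We represent the stable colour
as the whole sequence of round colours.\<close>
definition wl_stable :: "'a set \<Rightarrow> ('a \<Rightarrow> 'a \<Rightarrow> bool) \<Rightarrow> ('a \<Rightarrow> 'c) \<Rightarrow> 'a list \<Rightarrow> nat \<Rightarrow> 'c wlcol" where
  "wl_stable V E col vs = (\<lambda>n. wl_round V E col n vs)"

text \<open>chi^k of an l-tuple (l \<le> k, l \<ge> 1): pad with copies of the last entry.\<close>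
definition wl_color :: "'a set \<Rightarrow> ('a \<Rightarrow> 'a \<Rightarrow> bool) \<Rightarrow> ('a \<Rightarrow> 'c) \<Rightarrow> nat \<Rightarrow> 'a list \<Rightarrow> nat \<Rightarrow> 'c wlcol" where
  "wl_color V E col k us = wl_stable V E col (us @ replicate (k - length us) (last us))"

end

theory Submission
  imports Defs "HOL-Computational_Algebra.Formal_Power_Series"
begin


fun wc :: "'a set \<Rightarrow> ('a \<Rightarrow> 'a \<Rightarrow> bool) \<Rightarrow> 'a set \<Rightarrow> nat \<Rightarrow> 'a \<Rightarrow> 'a \<Rightarrow> nat" where
  "wc V E S 0 x y = (if x = y \<and> x \<in> V \<and> x \<notin> S then 1 else 0)"
| "wc V E S (Suc n) x y = (if x \<in> V \<and> x \<notin> S then (\<Sum>z\<in>V. if E x z then wc V E S n z y else 0) else 0)"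

lemma round_le:
  "n \<le> m \<Longrightarrow> wl_round V E c m s = wl_round V' E' c' m s' \<Longrightarrow> wl_round V E c n s = wl_round V' E' c' n s'"
proof (induction m)
  case 0 then show ?case by simp
next
  case (Suc m)
  then show ?case by (cases "n = Suc m") auto
qed

lemma round_atp:
  "wl_round V E c m s = wl_round V' E' c' m s' \<Longrightarrow> atp E s = atp E' s'"
  using round_le[of 0 m V E c s V' E' c' s'] by simp

lemma atp_nth: "i < length s \<Longrightarrow> j < length s \<Longrightarrow> atp E s ! i ! j = (s!i = s!j, E (s!i) (s!j))"
  by (simp add: atp_def)

lemma atp_eqD:
  assumes "atp E s = atp E' s'" "length s = length s'" "i < length s" "j < length s"
  shows "(s!i = s!j) = (s'!i = s'!j)" "E (s!i) (s!j) = E' (s'!i) (s'!j)"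
  using arg_cong[OF assms(1), of "\<lambda>a. a!i!j"] assms(2-4) by (auto simp: atp_nth)

lemma mset_sum_transfer:
  assumes "finite A" "finite B" "image_mset \<phi> (mset_set A) = image_mset \<psi> (mset_set B)"
    "\<forall>a\<in>A. \<forall>b\<in>B. \<phi> a = \<psi> b \<longrightarrow> f a = (g b :: nat)"
  shows "sum f A = sum g B"
  using assms
proof (induction A arbitrary: B rule: finite_induct)
  case empty
  then have "mset_set B = {#}" by simp
  then have "B = {}" using empty.prems(1) by (simp add: mset_set_empty_iff)
  then show ?case by simp
next
  case (insert a A)
  have e: "add_mset (\<phi> a) (image_mset \<phi> (mset_set A)) = image_mset \<psi> (mset_set B)"
    using insert by simp
  then have "\<phi> a \<in># image_mset \<psi> (mset_set B)" by (metis union_single_eq_member)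
  then obtain b where b: "b \<in> B" "\<psi> b = \<phi> a" using insert.prems(1) by auto
  have mb: "mset_set B = add_mset b (mset_set (B - {b}))"
    using b insert.prems(1) by (simp add: mset_set.remove)
  have e2: "image_mset \<phi> (mset_set A) = image_mset \<psi> (mset_set (B - {b}))"
    using e b mb by simp
  have "sum f A = sum g (B - {b})"
    using insert.IH[OF _ e2] insert.prems by auto
  moreover have "f a = g b" using insert.prems b by auto
  ultimately show ?case using insert b by (simp add: sum.remove)
qed

lemma mset_ex_transfer:
  assumes "finite A" "image_mset \<phi> (mset_set A) = image_mset \<psi> (mset_set B)" "a \<in> A"
  shows "\<exists>b\<in>B. \<psi> b = \<phi> a"
proof -
  have "\<phi> a \<in># image_mset \<psi> (mset_set B)" using assms by (metis finite_set_mset_mset_set image_eqI set_image_mset)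
  then obtain b where "b \<in># mset_set B" "\<psi> b = \<phi> a" by auto
  moreover have "finite B" using \<open>b \<in># mset_set B\<close> by (metis empty_iff mset_set.infinite set_mset_empty)
  ultimately show ?thesis by auto
qed

lemma step_lemma:
  assumes fin: "finite V" "finite V'"
    and eq: "\<forall>m. wl_round V E c m s = wl_round V' E' c' m s'"
    and w: "w \<in> V"
  shows "\<exists>w'\<in>V'. \<forall>m. \<forall>i<length s. wl_round V E c m (s[i:=w]) = wl_round V' E' c' m (s'[i:=w'])"
proof (rule ccontr)
  assume "\<not> ?thesis"
  then have "\<forall>w'\<in>V'. \<exists>m i. i < length s \<and> wl_round V E c m (s[i:=w]) \<noteq> wl_round V' E' c' m (s'[i:=w'])" by blast
  then obtain mm ii where mm: "\<forall>w'\<in>V'. ii w' < length s \<and> wl_round V E c (mm w') (s[ii w':=w]) \<noteq> wl_round V' E' c' (mm w') (s'[ii w':=w'])"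
    by metis
  define M where "M = Max (insert 0 (mm ` V'))"
  have Mge: "w' \<in> V' \<Longrightarrow> mm w' \<le> M" for w' unfolding M_def using fin by auto
  have "wl_round V E c (Suc M) s = wl_round V' E' c' (Suc M) s'" using eq by blast
  then have me: "image_mset (\<lambda>w. map (\<lambda>i. wl_round V E c M (s[i := w])) [0..<length s]) (mset_set V)
     = image_mset (\<lambda>w. map (\<lambda>i. wl_round V' E' c' M (s'[i := w])) [0..<length s']) (mset_set V')"
    by simp
  obtain w' where w': "w' \<in> V'" "map (\<lambda>i. wl_round V' E' c' M (s'[i := w'])) [0..<length s']
      = map (\<lambda>i. wl_round V E c M (s[i := w])) [0..<length s]"
    using mset_ex_transfer[OF fin(1) me w] by blast
  have "length s' = length s" using arg_cong[OF w'(2), of length] by simp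
  moreover have i: "ii w' < length s" using mm w'(1) by blast
  ultimately have "wl_round V E c M (s[ii w' := w]) = wl_round V' E' c' M (s'[ii w' := w'])"
    using arg_cong[OF w'(2), of "\<lambda>l. l ! (ii w')"] by simp
  then have "wl_round V E c (mm w') (s[ii w' := w]) = wl_round V' E' c' (mm w') (s'[ii w' := w'])"
    using round_le Mge[OF w'(1)] by blast
  then show False using mm w'(1) by blast
qed

lemma wc_transfer:
  assumes fin: "finite V" "finite V'"
    and pqr: "p < k" "q < k" "r < k" "p \<noteq> q" "q \<noteq> r"
  shows "\<forall>s s'. length s = k \<longrightarrow> length s' = k \<longrightarrow> set s \<subseteq> V \<longrightarrow> set s' \<subseteq> V'
      \<longrightarrow> wl_round V E c m s = wl_round V' E' c' m s'
      \<longrightarrow> wc V E {s!p} m (s!q) (s!r) = wc V' E' {s'!p} m (s'!q) (s'!r)"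
proof (induction m)
  case 0
  show ?case
  proof (intro allI impI)
    fix s s' :: "_ list"
    assume h: "length s = k" "length s' = k" "set s \<subseteq> V" "set s' \<subseteq> V'"
      "wl_round V E c 0 s = wl_round V' E' c' 0 s'"
    have a: "atp E s = atp E' s'" using round_atp[OF h(5)] .
    have "s!q \<in> V" "s'!q \<in> V'" using h pqr by auto
    moreover have "(s!q = s!r) = (s'!q = s'!r)" "(s!q = s!p) = (s'!q = s'!p)"
      using atp_eqD(1)[OF a] h pqr by auto
    ultimately show "wc V E {s!p} 0 (s!q) (s!r) = wc V' E' {s'!p} 0 (s'!q) (s'!r)" by auto
  qed
next
  case (Suc m)
  show ?case
  proof (intro allI impI)
    fix s s' :: "_ list"
    assume h: "length s = k" "length s' = k" "set s \<subseteq> V" "set s' \<subseteq> V'"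
      "wl_round V E c (Suc m) s = wl_round V' E' c' (Suc m) s'"
    have a: "atp E s = atp E' s'" using round_atp[OF h(5)] .
    have inV: "s!q \<in> V" "s'!q \<in> V'" using h pqr by auto
    have cq: "(s!q = s!p) = (s'!q = s'!p)"
      using atp_eqD(1)[OF a] h pqr by auto
    have me: "image_mset (\<lambda>w. map (\<lambda>i. wl_round V E c m (s[i := w])) [0..<length s]) (mset_set V)
     = image_mset (\<lambda>w. map (\<lambda>i. wl_round V' E' c' m (s'[i := w])) [0..<length s']) (mset_set V')"
      using h(5) by simp
    have sums: "(\<Sum>z\<in>V. if E (s!q) z then wc V E {s!p} m z (s!r) else 0)
        = (\<Sum>z\<in>V'. if E' (s'!q) z then wc V' E' {s'!p} m z (s'!r) else 0)"
    proof (rule mset_sum_transfer[OF fin me], intro ballI impI)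
      fix z z' assume z: "z \<in> V" "z' \<in> V'"
        and l: "map (\<lambda>i. wl_round V E c m (s[i := z])) [0..<length s] =
                map (\<lambda>i. wl_round V' E' c' m (s'[i := z'])) [0..<length s']"
      have lq: "wl_round V E c m (s[q := z]) = wl_round V' E' c' m (s'[q := z'])"
        using arg_cong[OF l, of "\<lambda>l. l ! q"] h pqr by simp
      have lp: "wl_round V E c m (s[p := z]) = wl_round V' E' c' m (s'[p := z'])"
        using arg_cong[OF l, of "\<lambda>l. l ! p"] h pqr by simp
      have ap: "atp E (s[p := z]) = atp E' (s'[p := z'])" using round_atp[OF lp] .
      have "E (s[p := z]!q) (s[p := z]!p) = E' (s'[p := z']!q) (s'[p := z']!p)"
        using atp_eqD(2)[OF ap, of q p] h pqr by simp
      then have ee: "E (s!q) z = E' (s'!q) z'" using h pqr by simp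
      have sq: "set (s[q := z]) \<subseteq> V" "set (s'[q := z']) \<subseteq> V'"
        using h z by (auto dest: set_update_subset_insert[THEN subsetD])
      have "wc V E {s[q:=z]!p} m (s[q:=z]!q) (s[q:=z]!r) = wc V' E' {s'[q:=z']!p} m (s'[q:=z']!q) (s'[q:=z']!r)"
        using Suc.IH h sq lq by auto
      then have "wc V E {s!p} m z (s!r) = wc V' E' {s'!p} m z' (s'!r)"
        using h pqr by simp
      then show "(if E (s!q) z then wc V E {s!p} m z (s!r) else 0)
           = (if E' (s'!q) z' then wc V' E' {s'!p} m z' (s'!r) else 0)" using ee by simp
    qed
    show "wc V E {s!p} (Suc m) (s!q) (s!r) = wc V' E' {s'!p} (Suc m) (s'!q) (s'!r)"
      using inV cq sums by simp
  qed
qed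



fun fp :: "'a set \<Rightarrow> ('a \<Rightarrow> 'a \<Rightarrow> bool) \<Rightarrow> 'a \<Rightarrow> 'a \<Rightarrow> nat \<Rightarrow> 'a \<Rightarrow> nat" where
  "fp V E u v 0 x = (if x = v then 1 else 0)"
| "fp V E u v (Suc n) x = (if x \<in> V \<and> x \<notin> {u,v} then (\<Sum>z\<in>V. if E x z then fp V E u v n z else 0) else 0)"

lemma wc_pos_in: "wc V E S n x y > 0 \<Longrightarrow> x \<in> V \<and> x \<notin> S"
  by (cases n) (auto split: if_splits)

lemma wc_end: "y \<in> S \<Longrightarrow> wc V E S n x y = 0"
proof (induction n arbitrary: x)
  case 0 then show ?case by auto
next
  case (Suc n)
  have h: "\<And>z. wc V E S n z y = 0" using Suc by blast
  show ?case using h by (auto intro!: sum.neutral)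
qed

lemma decomp:
  assumes fin: "finite V" and v: "v \<in> V" "v \<noteq> u"
  shows "wc V E {u} n x y = wc V E {u,v} n x y + (\<Sum>i\<le>n. fp V E u v i x * wc V E {u} (n-i) v y)"
proof (induction n arbitrary: x)
  case 0
  then show ?case using v by auto
next
  case (Suc n)
  show ?case
  proof (cases "x \<in> V \<and> x \<notin> {u,v}")
    case True
    have "wc V E {u} (Suc n) x y = (\<Sum>z\<in>V. if E x z then wc V E {u} n z y else 0)"
      using True by simp
    also have "\<dots> = (\<Sum>z\<in>V. (if E x z then wc V E {u,v} n z y else 0)
        + (\<Sum>i\<le>n. (if E x z then fp V E u v i z else 0) * wc V E {u} (n-i) v y))"
      by (rule sum.cong) (auto simp: Suc.IH)
    also have "\<dots> = (\<Sum>z\<in>V. if E x z then wc V E {u,v} n z y else 0)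
        + (\<Sum>i\<le>n. (\<Sum>z\<in>V. (if E x z then fp V E u v i z else 0)) * wc V E {u} (n-i) v y)"
      unfolding sum.distrib by (subst sum.swap) (simp add: sum_distrib_right)
    also have "\<dots> = wc V E {u,v} (Suc n) x y + (\<Sum>i\<le>n. fp V E u v (Suc i) x * wc V E {u} (Suc n - Suc i) v y)"
      using True by simp
    also have "\<dots> = wc V E {u,v} (Suc n) x y + (\<Sum>i\<le>Suc n. fp V E u v i x * wc V E {u} (Suc n - i) v y)"
      unfolding sum.atMost_Suc_shift using True by simp
    finally show ?thesis .
  next
    case False
    have f0: "\<And>i. fp V E u v (Suc i) x = 0" using False by auto
    have sh: "(\<Sum>i\<le>Suc n. fp V E u v i x * wc V E {u} (Suc n - i) v y) = fp V E u v 0 x * wc V E {u} (Suc n) v y"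
      unfolding sum.atMost_Suc_shift by (simp add: f0 del: fp.simps)
    show ?thesis
    proof (cases "x = v")
      case True
      have a: "wc V E {u,v} (Suc n) x y = 0" using True by simp
      have b: "fp V E u v 0 x = 1" using True by simp
      show ?thesis using sh a b True by (simp del: wc.simps fp.simps)
    next
      case F2: False
      have a: "wc V E {u,v} (Suc n) x y = 0" "wc V E {u} (Suc n) x y = 0" using False F2 by auto
      have b: "fp V E u v 0 x = 0" using F2 by simp
      show ?thesis using sh a b by (simp del: wc.simps fp.simps)
    qed
  qed
qed

definition W :: "'a set \<Rightarrow> ('a \<Rightarrow> 'a \<Rightarrow> bool) \<Rightarrow> 'a set \<Rightarrow> 'a \<Rightarrow> 'a \<Rightarrow> nat fps" where
  "W V E S x y = Abs_fps (\<lambda>n. wc V E S n x y)"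

lemma decomp_fps:
  assumes fin: "finite V" and v: "v \<in> V" "v \<noteq> u"
  shows "W V E {u} x y = W V E {u,v} x y + Abs_fps (\<lambda>n. fp V E u v n x) * W V E {u} v y"
proof (rule fps_ext)
  fix n
  show "fps_nth (W V E {u} x y) n = fps_nth (W V E {u,v} x y + Abs_fps (\<lambda>n. fp V E u v n x) * W V E {u} v y) n"
    using decomp[OF assms, where n=n and x=x and y=y and E=E]
    by (simp add: W_def fps_mult_nth atLeast0AtMost del: wc.simps fp.simps)
qed

lemma alg_aux: "(a::'x::comm_semiring_1) = b + d*e \<Longrightarrow> c = d*f \<Longrightarrow> a*f = b*f + c*e"
proof -
  assume h: "a = b + d*e" "c = d*f"
  have "a*f = b*f + d*e*f" using h(1) by (simp only: distrib_right)
  also have "d*e*f = (d*f)*e" by (simp only: mult.assoc mult.commute[of e f])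
  finally show ?thesis using h(2) by simp
qed

lemma key_identity:
  assumes fin: "finite V" and v: "v \<in> V" "v \<noteq> u"
  shows "W V E {u} x y * W V E {u} v v = W V E {u,v} x y * W V E {u} v v + W V E {u} x v * W V E {u} v y"
proof -
  have z: "W V E {u,v} x v = 0" by (rule fps_ext) (simp add: W_def wc_end)
  have a: "W V E {u} x v = Abs_fps (\<lambda>n. fp V E u v n x) * W V E {u} v v"
    using decomp_fps[OF assms, where x=x and y=v] z by simp
  show ?thesis by (rule alg_aux[OF decomp_fps[OF assms, where x=x and y=y] a])
qed

lemma wc_reach:
  assumes "wc V E S n x y > 0" "\<forall>a b. E a b \<longrightarrow> b \<in> V"
  shows "(x, y) \<in> {(a, b). a \<in> V - S \<and> b \<in> V - S \<and> E a b}\<^sup>*"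
  using assms(1)
proof (induction n arbitrary: x)
  case 0
  then have "x = y" by (simp split: if_splits)
  then show ?case by simp
next
  case (Suc n)
  have x: "x \<in> V" "x \<notin> S" using wc_pos_in[OF Suc.prems] by auto
  then have "(\<Sum>z\<in>V. if E x z then wc V E S n z y else 0) > 0" using Suc.prems by simp
  then have "\<exists>z\<in>V. (if E x z then wc V E S n z y else 0) > 0"
  proof (rule contrapos_pp)
    assume "\<not> (\<exists>z\<in>V. (if E x z then wc V E S n z y else 0) > 0)"
    then have "\<forall>z\<in>V. (if E x z then wc V E S n z y else 0) = 0" by (simp add: not_less)
    then show "\<not> (\<Sum>z\<in>V. if E x z then wc V E S n z y else 0) > 0" by simp
  qed
  then obtain z where z: "z \<in> V" "(if E x z then wc V E S n z y else 0) > 0" by blast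
  then have e: "E x z" "wc V E S n z y > 0" by (cases "E x z", simp_all)+
  then have "z \<notin> S" using wc_pos_in[of V E S n z y] by blast
  then have "(x, z) \<in> {(a, b). a \<in> V - S \<and> b \<in> V - S \<and> E a b}" using x e(1) z(1) by auto
  then show ?case using Suc.IH[OF e(2)] by (rule converse_rtrancl_into_rtrancl)
qed

lemma reach_wc:
  assumes "(x, y) \<in> {(a, b). a \<in> V - S \<and> b \<in> V - S \<and> E a b}\<^sup>*" "x \<in> V - S" "finite V"
  shows "\<exists>n. wc V E S n x y > 0"
  using assms(1,2)
proof (induction rule: converse_rtrancl_induct)
  case base then show ?case by (intro exI[of _ 0]) auto
next
  case (step x z)
  then obtain n where n: "wc V E S n z y > 0" by auto
  have e: "x \<in> V" "x \<notin> S" "E x z" "z \<in> V" using step(1) by auto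
  have "(if E x z then wc V E S n z y else 0) \<le> (\<Sum>z\<in>V. if E x z then wc V E S n z y else 0)"
    using e(4) assms(3) by (intro member_le_sum) auto
  then have "0 < (\<Sum>z\<in>V. if E x z then wc V E S n z y else 0)" using n e(3) by simp
  then have "wc V E S (Suc n) x y > 0" using e(1,2) by simp
  then show ?case by blast
qed



lemma fps_from_wc:
  "(\<And>n. wc V E S n x y = wc V' E' S' n x' y') \<Longrightarrow> W V E S x y = W V' E' S' x' y'"
  by (rule fps_ext) (simp add: W_def)

lemma cancel_aux: "(a::nat fps) + b = b \<Longrightarrow> a = 0"
  by (metis add.commute add.right_neutral add_left_imp_eq)

theorem corollary14:
  fixes VG :: "'a set" and EG :: "'a \<Rightarrow> 'a \<Rightarrow> bool" and colG :: "'a \<Rightarrow> 'c"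
    and VH :: "'b set" and EH :: "'b \<Rightarrow> 'b \<Rightarrow> bool" and colH :: "'b \<Rightarrow> 'c"
    and k :: nat and u v :: 'a and u' v' :: 'b
  assumes "k \<ge> 3"
    and "graph VG EG" and "graph VH EH"
    and "two_connected VG EG" and "two_connected VH EH"
    and "u \<in> VG" and "v \<in> VG" and "u' \<in> VH" and "v' \<in> VH"
    and "\<not> connected_on (VG - {u, v}) EG"
    and "connected_on (VH - {u', v'}) EH"
  shows "wl_color VG EG colG k [u, v] \<noteq> wl_color VH EH colH k [u', v']"
proof
  assume eqc: "wl_color VG EG colG k [u, v] = wl_color VH EH colH k [u', v']"
  note k = assms(1)
  define t where "t = [u, v] @ replicate (k - 2) v"
  define t' where "t' = [u', v'] @ replicate (k - 2) v'"
  have eq: "\<forall>m. wl_round VG EG colG m t = wl_round VH EH colH m t'"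
    using eqc unfolding wl_color_def wl_stable_def t_def t'_def by (simp add: fun_eq_iff numeral_2_eq_2)
  have finG: "finite VG" and finH: "finite VH" using assms(2,3) by (auto simp: graph_def)
  have EGV: "\<forall>a b. EG a b \<longrightarrow> b \<in> VG" using assms(2) by (auto simp: graph_def)
  have lt: "length t = k" "length t' = k" using k by (auto simp: t_def t'_def)
  have tn: "t!0 = u" "t!1 = v" "t!2 = v" "t'!0 = u'" "t'!1 = v'" "t'!2 = v'"
    using k by (auto simp: t_def t'_def nth_append)
  have st: "set t \<subseteq> VG" "set t' \<subseteq> VH" using assms(6-9) by (auto simp: t_def t'_def)
  have uv: "u \<noteq> v"
  proof
    assume "u = v"
    then have "connected_on (VG - {u, v}) EG" using assms(4,6) by (auto simp: two_connected_def)
    then show False using assms(10) by blast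
  qed
  have at: "atp EG t = atp EH t'" using round_atp eq by blast
  have uv': "u' \<noteq> v'" using atp_eqD(1)[OF at, of 0 1] lt k tn uv by simp
  obtain x y where xy: "x \<in> VG - {u, v}" "y \<in> VG - {u, v}"
    "(x, y) \<notin> {(a, b). a \<in> VG - {u, v} \<and> b \<in> VG - {u, v} \<and> EG a b}\<^sup>*"
    using assms(10) unfolding connected_on_def by blast
  have B0: "W VG EG {u, v} x y = 0"
  proof (rule fps_ext)
    fix n
    have "\<not> wc VG EG {u, v} n x y > 0" using wc_reach[OF _ EGV] xy(3) by blast
    then show "fps_nth (W VG EG {u, v} x y) n = fps_nth 0 n" by (simp add: W_def)
  qed
  have idG: "W VG EG {u} x y * W VG EG {u} v v = W VG EG {u} x v * W VG EG {u} v y"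
    using key_identity[OF finG assms(7) uv[symmetric], where x=x and y=y and E=EG] B0 by simp
  obtain x' where x': "x' \<in> VH" "\<forall>m. \<forall>i<length t. wl_round VG EG colG m (t[i:=x]) = wl_round VH EH colH m (t'[i:=x'])"
    using step_lemma[OF finG finH eq, of x] xy(1) by blast
  define s1 where "s1 = t[2:=x]"
  define s1' where "s1' = t'[2:=x']"
  have eq1: "\<forall>m. wl_round VG EG colG m s1 = wl_round VH EH colH m s1'"
    using x'(2) lt k unfolding s1_def s1'_def by simp
  have ls1: "length s1 = k" "length s1' = k" using lt by (auto simp: s1_def s1'_def)
  have s1n: "s1!0 = u" "s1!1 = v" "s1!2 = x" "s1'!0 = u'" "s1'!1 = v'" "s1'!2 = x'"
    using tn lt k by (auto simp: s1_def s1'_def)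
  have ss1: "set s1 \<subseteq> VG" "set s1' \<subseteq> VH" using st xy(1) x'(1) unfolding s1_def s1'_def
    by (auto dest: set_update_subset_insert[THEN subsetD])
  have at1: "atp EG s1 = atp EH s1'" using round_atp eq1 by blast
  have x'ne: "x' \<noteq> u'" "x' \<noteq> v'"
    using atp_eqD(1)[OF at1, of 2 0] atp_eqD(1)[OF at1, of 2 1] ls1 k s1n xy(1) by auto
  obtain y' where y': "y' \<in> VH" "\<forall>m. \<forall>i<length s1. wl_round VG EG colG m (s1[i:=y]) = wl_round VH EH colH m (s1'[i:=y'])"
    using step_lemma[OF finG finH eq1, of y] xy(2) by blast
  define s2 where "s2 = s1[1:=y]"
  define s2' where "s2' = s1'[1:=y']"
  define s3 where "s3 = s1[2:=y]"
  define s3' where "s3' = s1'[2:=y']"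
  have eq2: "\<forall>m. wl_round VG EG colG m s2 = wl_round VH EH colH m s2'"
    using y'(2) ls1 k unfolding s2_def s2'_def by simp
  have eq3: "\<forall>m. wl_round VG EG colG m s3 = wl_round VH EH colH m s3'"
    using y'(2) ls1 k unfolding s3_def s3'_def by simp
  have ls23: "length s2 = k" "length s2' = k" "length s3 = k" "length s3' = k"
    using ls1 by (auto simp: s2_def s2'_def s3_def s3'_def)
  have s2n: "s2!0 = u" "s2!1 = y" "s2!2 = x" "s2'!0 = u'" "s2'!1 = y'" "s2'!2 = x'"
    using s1n ls1 k by (auto simp: s2_def s2'_def)
  have s3n: "s3!0 = u" "s3!1 = v" "s3!2 = y" "s3'!0 = u'" "s3'!1 = v'" "s3'!2 = y'"
    using s1n ls1 k by (auto simp: s3_def s3'_def)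
  have ss23: "set s2 \<subseteq> VG" "set s2' \<subseteq> VH" "set s3 \<subseteq> VG" "set s3' \<subseteq> VH"
    using ss1 xy(2) y'(1) unfolding s2_def s2'_def s3_def s3'_def
    by (auto dest: set_update_subset_insert[THEN subsetD])
  have at3: "atp EG s3 = atp EH s3'" using round_atp eq3 by blast
  have y'ne: "y' \<noteq> u'" "y' \<noteq> v'"
    using atp_eqD(1)[OF at3, of 2 0] atp_eqD(1)[OF at3, of 2 1] ls23 k s3n xy(2) by auto
  have T012: "\<forall>s s'. length s = k \<longrightarrow> length s' = k \<longrightarrow> set s \<subseteq> VG \<longrightarrow> set s' \<subseteq> VH
      \<longrightarrow> wl_round VG EG colG m s = wl_round VH EH colH m s'
      \<longrightarrow> wc VG EG {s!0} m (s!1) (s!2) = wc VH EH {s'!0} m (s'!1) (s'!2)" for m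
    by (rule wc_transfer[OF finG finH]) (use k in auto)
  have T021: "\<forall>s s'. length s = k \<longrightarrow> length s' = k \<longrightarrow> set s \<subseteq> VG \<longrightarrow> set s' \<subseteq> VH
      \<longrightarrow> wl_round VG EG colG m s = wl_round VH EH colH m s'
      \<longrightarrow> wc VG EG {s!0} m (s!2) (s!1) = wc VH EH {s'!0} m (s'!2) (s'!1)" for m
    by (rule wc_transfer[OF finG finH]) (use k in auto)
  have Wvv: "W VG EG {u} v v = W VH EH {u'} v' v'"
    by (rule fps_from_wc) (use T012 lt st eq tn in metis)
  have Wxv: "W VG EG {u} x v = W VH EH {u'} x' v'"
    by (rule fps_from_wc) (use T021 ls1 ss1 eq1 s1n in metis)
  have Wxy: "W VG EG {u} x y = W VH EH {u'} x' y'"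
    by (rule fps_from_wc) (use T021 ls23 ss23 eq2 s2n in metis)
  have Wvy: "W VG EG {u} v y = W VH EH {u'} v' y'"
    by (rule fps_from_wc) (use T012 ls23 ss23 eq3 s3n in metis)
  have idH: "W VH EH {u'} x' y' * W VH EH {u'} v' v' = W VH EH {u'} x' v' * W VH EH {u'} v' y'"
    using idG Wvv Wxv Wxy Wvy by simp
  have "W VH EH {u',v'} x' y' * W VH EH {u'} v' v' + W VH EH {u'} x' v' * W VH EH {u'} v' y'
      = W VH EH {u'} x' v' * W VH EH {u'} v' y'"
    using key_identity[OF finH assms(9) uv'[symmetric], where x=x' and y=y' and E=EH] idH by simp
  then have prod0: "W VH EH {u',v'} x' y' * W VH EH {u'} v' v' = 0" by (rule cancel_aux)
  have Bz: "wc VH EH {u',v'} n x' y' = 0" for n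
  proof -
    have "fps_nth (W VH EH {u',v'} x' y' * W VH EH {u'} v' v') n = 0" unfolding prod0 by simp
    then have s0: "(\<Sum>i=0..n. wc VH EH {u',v'} i x' y' * wc VH EH {u'} (n - i) v' v') = 0"
      by (simp add: fps_mult_nth W_def)
    have "wc VH EH {u',v'} n x' y' * wc VH EH {u'} (n - n) v' v'
        \<le> (\<Sum>i=0..n. wc VH EH {u',v'} i x' y' * wc VH EH {u'} (n - i) v' v')"
      by (rule member_le_sum) auto
    then show ?thesis using s0 assms(9) uv' by simp
  qed
  have "(x', y') \<in> {(a, b). a \<in> VH - {u', v'} \<and> b \<in> VH - {u', v'} \<and> EH a b}\<^sup>*"
    using assms(11) x'(1) y'(1) x'ne y'ne unfolding connected_on_def by blast
  then obtain n where "wc VH EH {u',v'} n x' y' > 0"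
    using reach_wc[OF _ _ finH] x'(1) x'ne by blast
  then show False using Bz by simp
qed

end
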